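(* Let $\ell,d_1,\dots,d_\ell\in\mathbb N$, let $\mathcal L=\{-\ell,\dots,-1,1,\dots,\ell\}$, set $e_i=\operatorname{sgn}(i)d_{|i|}$ for $i\in\mathcal L$, and for $S\subseteq\mathcal L$ put $e_S=\sum_{i\in S}e_i$. Fix $\beta\in\mathbb N$ and $b_1,\dots,b_\beta\in\mathbb N$. Then $$\sum_{S_1,\dots,S_\beta}\Bigl(\sum_{i=1}^\beta e_{S_i}\Bigr)^2$$ is an integral multiple of $\sum_{i\in\mathcal L}e_i^2$, where the outer sum runs over all tuples $(S_1,\dots,S_\beta)$ of subsets $S_i\subseteq\mathcal L$ with $|S_i|=b_i$. *)

theory Defs
  imports "HOL-Library.FuncSet"
begin

definition signedIdx :: "nat \<Rightarrow> int set" where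
  "signedIdx l = {-int l..-1} \<union> {1..int l}"

definition eval_e :: "(nat \<Rightarrow> nat) \<Rightarrow> int \<Rightarrow> int" where
  "eval_e d i = sgn i * int (d (nat \<bar>i\<bar>))"

definition eval_eS :: "(nat \<Rightarrow> nat) \<Rightarrow> int set \<Rightarrow> int" where
  "eval_eS d S = (\<Sum>i\<in>S. eval_e d i)"

end

theory Submission
  imports Defs
begin

lemma e_neg: "eval_e d (-i) = - eval_e d i"
  by (simp add: eval_e_def sgn_minus)

lemma L_neg: "(-i \<in> signedIdx l) = (i \<in> signedIdx l)"
  by (auto simp: signedIdx_def)

lemma L_fin: "finite (signedIdx l)"
  by (simp add: signedIdx_def)

lemma E0: "(\<Sum>i\<in>signedIdx l. eval_e d i) = 0"
proof -
  have "(\<Sum>i\<in>signedIdx l. eval_e d i) = (\<Sum>i\<in>signedIdx l. eval_e d (-i))"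
    by (rule sum.reindex_bij_witness[of _ uminus uminus]) (auto simp: L_neg)
  then show ?thesis by (simp add: e_neg sum_negf)
qed

lemma eS_neg: "eval_eS d (uminus ` T) = - eval_eS d T"
  by (simp add: eval_eS_def sum.reindex inj_on_def e_neg sum_negf)

lemma step1: "(\<Sum>T\<in>{T. T \<subseteq> signedIdx l \<and> card T = b}. eval_eS d T) = 0"
proof -
  let ?A = "{T. T \<subseteq> signedIdx l \<and> card T = b}"
  have ci: "card (uminus ` T) = card (T::int set)" for T
    by (simp add: card_image inj_on_def)
  have "(\<Sum>T\<in>?A. eval_eS d T) = (\<Sum>T\<in>?A. eval_eS d (uminus ` T))"
    apply (rule sum.reindex_bij_witness[of _ "\<lambda>T. uminus ` T" "\<lambda>T. uminus ` T"])
        apply (auto simp: image_image ci L_neg)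
    done
  then show ?thesis by (simp add: eS_neg sum_negf)
qed

lemma count_sup:
  assumes "finite L" "K \<subseteq> L"
  shows "card {T. T \<subseteq> L \<and> card T = b \<and> K \<subseteq> T} =
    (if card K \<le> b then (card L - card K) choose (b - card K) else 0)"
proof (cases "card K \<le> b")
  case True
  have fK: "finite K" using assms finite_subset by blast
  have eq: "{T. T \<subseteq> L \<and> card T = b \<and> K \<subseteq> T} =
     (\<lambda>U. U \<union> K) ` {U. U \<subseteq> L - K \<and> card U = b - card K}"
  proof (rule set_eqI, rule iffI)
    fix T assume T: "T \<in> {T. T \<subseteq> L \<and> card T = b \<and> K \<subseteq> T}"
    then have "T - K \<subseteq> L - K" "card (T - K) = b - card K" "T = (T - K) \<union> K"
      using card_Diff_subset[OF fK] by auto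
    then show "T \<in> (\<lambda>U. U \<union> K) ` {U. U \<subseteq> L - K \<and> card U = b - card K}" by blast
  next
    fix T assume "T \<in> (\<lambda>U. U \<union> K) ` {U. U \<subseteq> L - K \<and> card U = b - card K}"
    then obtain U where U: "U \<subseteq> L - K" "card U = b - card K" "T = U \<union> K" by blast
    have fU: "finite U" using U(1) assms(1) finite_subset by blast
    have "U \<inter> K = {}" using U(1) by blast
    then have "card T = card U + card K" using U fU fK by (simp add: card_Un_disjoint)
    then show "T \<in> {T. T \<subseteq> L \<and> card T = b \<and> K \<subseteq> T}" using U True assms by auto
  qed
  have inj: "inj_on (\<lambda>U. U \<union> K) {U. U \<subseteq> L - K \<and> card U = b - card K}"
    by (rule inj_onI) blast
  have "card {T. T \<subseteq> L \<and> card T = b \<and> K \<subseteq> T} = card {U. U \<subseteq> L - K \<and> card U = b - card K}"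
    unfolding eq by (rule card_image[OF inj])
  also have "\<dots> = card (L - K) choose (b - card K)"
    by (rule n_subsets) (use assms in auto)
  also have "card (L - K) = card L - card K" using assms fK by (simp add: card_Diff_subset)
  finally show ?thesis using True by simp
next
  case False
  have e: "{T. T \<subseteq> L \<and> card T = b \<and> K \<subseteq> T} = {}"
  proof -
    { fix T assume "T \<subseteq> L" "card T = b" "K \<subseteq> T"
      then have "card K \<le> b" using card_mono assms(1) finite_subset by metis
      with False have False by simp }
    then show ?thesis by blast
  qed
  show ?thesis using False by (simp only: e card.empty if_False)
qed

lemma step2:
  "\<exists>m::int. (\<Sum>T\<in>{T. T \<subseteq> signedIdx l \<and> card T = b}. (eval_eS d T)^2)
      = m * (\<Sum>i\<in>signedIdx l. (eval_e d i)^2)"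
proof -
  define L where "L = signedIdx l"
  define A where "A = {T. T \<subseteq> L \<and> card T = b}"
  define e where "e = eval_e d"
  define N where "N i k = int (card {T\<in>A. i\<in>T \<and> k\<in>T})" for i k
  define N1 where "N1 = int (if card {0::int} \<le> b then (card L - card {0::int}) choose (b - card {0::int}) else 0)"
  define N2 where "N2 = int (if card {0::int,1} \<le> b then (card L - card {0::int,1}) choose (b - card {0::int,1}) else 0)"
  have fL: "finite L" unfolding L_def by (rule L_fin)
  have fA: "finite A" unfolding A_def using fL by simp
  have E: "(\<Sum>i\<in>L. e i) = 0" unfolding L_def e_def by (rule E0)
  have N1: "N i i = N1" if "i \<in> L" for i
  proof -
    have "{T\<in>A. i\<in>T \<and> i\<in>T} = {T. T \<subseteq> L \<and> card T = b \<and> {i} \<subseteq> T}" unfolding A_def by auto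
    then show ?thesis unfolding N_def N1_def using count_sup[OF fL, of "{i}" b] that by simp
  qed
  have N2: "N i k = N2" if "i \<in> L" "k \<in> L" "i \<noteq> k" for i k
  proof -
    have "{T\<in>A. i\<in>T \<and> k\<in>T} = {T. T \<subseteq> L \<and> card T = b \<and> {i,k} \<subseteq> T}" unfolding A_def by auto
    then show ?thesis unfolding N_def N2_def using count_sup[OF fL, of "{i,k}" b] that by simp
  qed
  have sq: "(eval_eS d T)^2 = (\<Sum>i\<in>L. \<Sum>k\<in>L. if i \<in> T \<and> k \<in> T then e i * e k else 0)"
    if "T \<in> A" for T
  proof -
    have "eval_eS d T = (\<Sum>i\<in>L. if i \<in> T then e i else 0)"
      unfolding eval_eS_def e_def using sum.inter_restrict[OF fL, of "eval_e d" T] that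
      by (simp add: A_def Int_absorb1)
    moreover have "(\<Sum>i\<in>L. if i \<in> T then e i else 0)^2 = (\<Sum>i\<in>L. \<Sum>k\<in>L. (if i \<in> T then e i else 0) * (if k \<in> T then e k else 0))"
      by (simp only: power2_eq_square sum_product)
    ultimately show ?thesis
      by (auto intro!: sum.cong)
  qed
  have cnt: "(\<Sum>T\<in>A. if i \<in> T \<and> k \<in> T then c else 0) = c * N i k" for i k and c :: int
    unfolding N_def using sum.inter_filter[OF fA, of "\<lambda>_. c" "\<lambda>T. i \<in> T \<and> k \<in> T"]
    by (simp add: mult.commute)
  have "(\<Sum>T\<in>A. (eval_eS d T)^2) = (\<Sum>T\<in>A. \<Sum>i\<in>L. \<Sum>k\<in>L. if i \<in> T \<and> k \<in> T then e i * e k else 0)"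
    using sq by (rule sum.cong[OF refl])
  also have "\<dots> = (\<Sum>i\<in>L. \<Sum>k\<in>L. \<Sum>T\<in>A. if i \<in> T \<and> k \<in> T then e i * e k else 0)"
    by (simp add: sum.swap[of _ A] )
  also have "\<dots> = (\<Sum>i\<in>L. \<Sum>k\<in>L. e i * e k * N i k)"
    by (simp add: cnt)
  also have "\<dots> = (\<Sum>i\<in>L. (N1 - N2) * (e i)^2)"
  proof (rule sum.cong[OF refl])
    fix i assume i: "i \<in> L"
    have "(\<Sum>k\<in>L. e i * e k * N i k) = (\<Sum>k\<in>L. e i * e k * N2 + (if k = i then e i * e k * (N1 - N2) else 0))"
      by (rule sum.cong[OF refl]) (auto simp: N1 N2 i algebra_simps)
    also have "\<dots> = e i * N2 * (\<Sum>k\<in>L. e k) + e i * e i * (N1 - N2)"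
      using i fL by (simp add: sum.distrib sum_distrib_left algebra_simps)
    finally show "(\<Sum>k\<in>L. e i * e k * N i k) = (N1 - N2) * (e i)^2"
      by (simp add: E power2_eq_square)
  qed
  finally show ?thesis unfolding A_def L_def e_def by (auto simp: sum_distrib_left)
qed


theorem lemma6p5:
  fixes l \<beta> :: nat and d b :: "nat \<Rightarrow> nat"
  shows "(\<Sum>i\<in>signedIdx l. (eval_e d i)^2) dvd
    (\<Sum>S\<in>(\<Pi>\<^sub>E j\<in>{1..\<beta>}. {T. T \<subseteq> signedIdx l \<and> card T = b j}).
        (\<Sum>j=1..\<beta>. eval_eS d (S j))^2)"
proof (induction \<beta>)
  case 0
  then show ?case by simp
next
  case (Suc n)
  define A where "A j = {T. T \<subseteq> signedIdx l \<and> card T = b j}" for j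
  define Q where "Q = (\<Sum>i\<in>signedIdx l. (eval_e d i)^2)"
  define X where "X g = (\<Sum>j=1..n. eval_eS d (g j))" for g :: "nat \<Rightarrow> int set"
  define P where "P = (\<Pi>\<^sub>E j\<in>{1..n}. A j)"
  have IH: "Q dvd (\<Sum>g\<in>P. (X g)^2)" using Suc.IH unfolding Q_def X_def P_def A_def .
  have fA: "finite (A j)" for j unfolding A_def using L_fin by simp
  have fP: "finite P" unfolding P_def using fA by (simp add: finite_PiE)
  have ins: "{1..Suc n} = insert (Suc n) {1..n}" by (simp add: atLeastAtMostSuc_conv)
  have notin: "Suc n \<notin> {1..n}" by simp
  have F: "(\<Sum>j=1..Suc n. eval_eS d ((g(Suc n := y)) j)) = X g + eval_eS d y" for g y
  proof -
    have "(\<Sum>j=1..Suc n. eval_eS d ((g(Suc n := y)) j)) = (\<Sum>j=1..n. eval_eS d ((g(Suc n := y)) j)) + eval_eS d y"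
      by (simp add: ins notin sum.insert)
    also have "(\<Sum>j=1..n. eval_eS d ((g(Suc n := y)) j)) = X g"
      unfolding X_def by (rule sum.cong) auto
    finally show ?thesis .
  qed
  have "(\<Sum>S\<in>(\<Pi>\<^sub>E j\<in>{1..Suc n}. A j). (\<Sum>j=1..Suc n. eval_eS d (S j))^2)
      = (\<Sum>p\<in>A (Suc n) \<times> P. (\<lambda>(y, g). (\<Sum>j=1..Suc n. eval_eS d ((g(Suc n := y)) j))^2) p)"
    unfolding ins PiE_insert_eq P_def
    by (subst sum.reindex[OF inj_combinator[OF notin]]) (simp add: case_prod_unfold)
  also have "\<dots> = (\<Sum>y\<in>A (Suc n). \<Sum>g\<in>P. (X g + eval_eS d y)^2)"
    unfolding F by (simp add: sum.cartesian_product)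
  also have "\<dots> = (\<Sum>y\<in>A (Suc n). \<Sum>g\<in>P. (X g)^2 + 2 * eval_eS d y * X g + (eval_eS d y)^2)"
    by (simp add: power2_sum algebra_simps)
  also have "\<dots> = of_nat (card (A (Suc n))) * (\<Sum>g\<in>P. (X g)^2)
       + 2 * (\<Sum>y\<in>A (Suc n). eval_eS d y) * (\<Sum>g\<in>P. X g)
       + of_nat (card P) * (\<Sum>y\<in>A (Suc n). (eval_eS d y)^2)"
    by (simp add: sum.distrib sum_distrib_left sum_distrib_right algebra_simps sum.swap[of _ P])
  also have "(\<Sum>y\<in>A (Suc n). eval_eS d y) = 0" unfolding A_def by (rule step1)
  finally have eq: "(\<Sum>S\<in>(\<Pi>\<^sub>E j\<in>{1..Suc n}. A j). (\<Sum>j=1..Suc n. eval_eS d (S j))^2)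
     = of_nat (card (A (Suc n))) * (\<Sum>g\<in>P. (X g)^2) + of_nat (card P) * (\<Sum>y\<in>A (Suc n). (eval_eS d y)^2)"
    by simp
  obtain m where m: "(\<Sum>y\<in>A (Suc n). (eval_eS d y)^2) = m * Q"
    using step2 unfolding A_def Q_def by blast
  have "Q dvd (\<Sum>S\<in>(\<Pi>\<^sub>E j\<in>{1..Suc n}. A j). (\<Sum>j=1..Suc n. eval_eS d (S j))^2)"
    unfolding eq m using IH by simp
  then show ?case unfolding A_def Q_def .
qed

end
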